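(* Let $n_x\ge1$, $t\ge 0$, and let $\bm{M}_0,\dots,\bm{M}_t$ and $\widehat{\bm{Q}}$ be $n_x\times n_x$ symmetric positive definite matrices such that the ellipsoid $\widehat{\mathcal{E}}=\mathcal{E}(\bm{0},\widehat{\bm{Q}})$ contains the Minkowski sum $\mathcal{X}=\mathcal{E}(\bm{0},\bm{M}_0)+\cdots+\mathcal{E}(\bm{0},\bm{M}_t)$. Let $\delta_{\mathrm{H}}$ be the Hausdorff distance between $\mathcal{X}$ and $\widehat{\mathcal{E}}$, which equals $$\delta_{\mathrm{H}}=\sup_{\bm{s}\in\mathcal{S}^{n_x-1}}\left(\big\|\widehat{\bm{Q}}^{1/2}\bm{s}\big\|_2-\sum_{k=0}^{t}\big\|\bm{M}_k^{1/2}\bm{s}\big\|_2\right).$$ Then $$\delta_{\mathrm{H}}\leq\Big\|\widehat{\bm{Q}}^{1/2}-\sum_{k=0}^{t}\bm{M}_k^{1/2}\Big\|_2,$$ where $\|\cdot\|_2$ on matrices denotes the spectral (operator 2-) norm.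
   Context: $\mathcal{E}(\bm{0},\bm{Q})=\{\bm{x}\in\mathbb{R}^{n_x}:\bm{x}^\top\bm{Q}^{-1}\bm{x}\le1\}$ for symmetric positive definite $\bm{Q}$. $\mathcal{S}^{n_x-1}$ is the Euclidean unit sphere in $\mathbb{R}^{n_x}$, and $\bm{A}^{1/2}$ is the symmetric positive definite square root. The Hausdorff distance is $\max\{\sup_{\bm{x}\in\mathcal{X}}\inf_{\bm{y}\in\widehat{\mathcal{E}}}\|\bm{x}-\bm{y}\|_2,\ \sup_{\bm{y}\in\widehat{\mathcal{E}}}\inf_{\bm{x}\in\mathcal{X}}\|\bm{x}-\bm{y}\|_2\}$. In the paper, $\mathcal{X}$ is the reach set at time $t$ of the linear system $\bm{x}(t+1)=\bm{F}\bm{x}(t)+\bm{G}\bm{u}(t)$ with ellipsoidal initial-condition and control sets centered at the origin, with $\bm{M}_t=\bm{F}^t\bm{Q}_0(\bm{F}^\top)^t$ and $\bm{M}_k=\bm{F}^{t-k-1}\bm{G}\bm{U}\bm{G}^\top(\bm{F}^\top)^{t-k-1}$ for $k<t$, and $\widehat{\bm{Q}}$ is the shape matrix of an outer ellipsoidal approximation of it. *)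

theory Defs
  imports "HOL-Analysis.Analysis"
begin

definition sym_pos_def :: "real^'n^'n \<Rightarrow> bool" where
  "sym_pos_def A \<longleftrightarrow> transpose A = A \<and> (\<forall>x. x \<noteq> 0 \<longrightarrow> x \<bullet> (A *v x) > 0)"

definition msqrt :: "real^'n^'n \<Rightarrow> real^'n^'n" where
  "msqrt A = (THE S. sym_pos_def S \<and> S ** S = A)"

definition ellipsoid0 :: "real^'n^'n \<Rightarrow> (real^'n) set" where
  "ellipsoid0 Q = {x. x \<bullet> (matrix_inv Q *v x) \<le> 1}"

definition ellipsoid_msum :: "(nat \<Rightarrow> real^'n^'n) \<Rightarrow> nat \<Rightarrow> (real^'n) set" where
  "ellipsoid_msum M t = {(\<Sum>k\<le>t. x k) | x. \<forall>k\<le>t. x k \<in> ellipsoid0 (M k)}"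

definition hausdorff_dist :: "'a::metric_space set \<Rightarrow> 'a set \<Rightarrow> real" where
  "hausdorff_dist X Y = max (SUP x\<in>X. infdist x Y) (SUP y\<in>Y. infdist y X)"

definition spec_norm :: "real^'n^'m \<Rightarrow> real" where
  "spec_norm A = onorm (\<lambda>x. A *v x)"

end

theory Submission
  imports Defs
begin


lemma sym_inner:
  fixes A :: "real^'n^'n"
  assumes "transpose A = A"
  shows "x \<bullet> (A *v y) = (A *v x) \<bullet> y"
  by (metis assms dot_lmul_matrix inner_commute transpose_matrix_vector)

lemma quad_zero:
  fixes a c :: real
  assumes "\<And>t. 0 \<le> 2*t*a + t*t*c" and "0 \<le> a"
  shows "a = 0"
proof -
  define s where "s = 1/(\<bar>c\<bar>+1)"
  have s: "s > 0" "s * \<bar>c\<bar> < 1" unfolding s_def by (auto simp: field_simps)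
  have "0 \<le> 2*(-s*a)*a + (-s*a)*(-s*a)*c" by (rule assms(1))
  hence "0 \<le> s*a*a*(s*c - 2)" by (simp add: algebra_simps)
  moreover have "s*c - 2 < 0" using s abs_ge_self[of c] by (smt (verit) mult_left_mono)
  ultimately have "s*a*a \<le> 0" by (smt (verit) mult_pos_neg zero_le_mult_iff)
  hence "a * a \<le> 0" using s by (smt (verit) mult_pos_pos mult.assoc)
  thus ?thesis using assms(2) by (smt (verit) mult_pos_pos)
qed


lemma quad_scale:
  fixes A :: "real^'n^'n"
  shows "(c *\<^sub>R x) \<bullet> (A *v (c *\<^sub>R x)) = c*c * (x \<bullet> (A *v x))"
  by (simp add: matrix_vector_mult_scaleR algebra_simps)

lemma rayleigh_bound:
  fixes A :: "real^'n^'n"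
  assumes V: "subspace V" and v: "v \<in> V" "norm v = 1"
    and max: "\<forall>y\<in>V \<inter> sphere 0 1. y \<bullet> (A *v y) \<le> v \<bullet> (A *v v)"
    and x: "x \<in> V"
  shows "x \<bullet> (A *v x) \<le> (v \<bullet> (A *v v)) * (x \<bullet> x)"
proof (cases "x = 0")
  case True then show ?thesis by simp
next
  case False
  let ?y = "(1/norm x) *\<^sub>R x"
  have "?y \<in> V" using V x by (simp add: subspace_scale)
  moreover have "?y \<in> sphere 0 1" using False by simp
  ultimately have "?y \<bullet> (A *v ?y) \<le> v \<bullet> (A *v v)" using max by blast
  hence "(1/norm x)*(1/norm x) * (x \<bullet> (A *v x)) \<le> v \<bullet> (A *v v)" by (simp only: quad_scale)
  moreover have "x \<bullet> x = norm x * norm x" by (simp add: dot_square_norm power2_eq_square)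
  moreover have "norm x > 0" using False by simp
  ultimately show ?thesis by (simp add: field_simps)
qed

lemma spectral_sub:
  fixes A :: "real^'n^'n"
  assumes symA: "transpose A = A"
  shows "subspace V \<Longrightarrow> (\<forall>x\<in>V. A *v x \<in> V) \<Longrightarrow>
    \<exists>B. finite B \<and> B \<subseteq> V \<and> (\<forall>v\<in>B. norm v = 1 \<and> (\<exists>l. A *v v = l *\<^sub>R v))
      \<and> (\<forall>v\<in>B. \<forall>w\<in>B. v \<noteq> w \<longrightarrow> v \<bullet> w = 0)
      \<and> (\<forall>x\<in>V. x = (\<Sum>v\<in>B. (x \<bullet> v) *\<^sub>R v))"
proof (induction "dim V" arbitrary: V rule: less_induct)
  case less
  show ?case
  proof (cases "V \<subseteq> {0}")
    case True
    show ?thesis by (rule exI[of _ "{}"]) (use True in auto)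
  next
    case False
    then obtain x0 where x0: "x0 \<in> V" "x0 \<noteq> 0" by auto
    let ?K = "V \<inter> sphere 0 1"
    have "(1/norm x0) *\<^sub>R x0 \<in> ?K" using x0 less.prems by (simp add: subspace_scale)
    hence Kne: "?K \<noteq> {}" by blast
    have Kc: "compact ?K"
      using closed_subspace[OF less.prems(1)] compact_sphere by (metis compact_Int_closed inf_commute)
    have cont: "continuous_on ?K (\<lambda>x. x \<bullet> (A *v x))"
      by (intro continuous_intros)
    obtain v where v: "v \<in> ?K" and vmax: "\<forall>y\<in>?K. y \<bullet> (A *v y) \<le> v \<bullet> (A *v v)"
      using continuous_attains_sup[OF Kc Kne cont] by blast
    define l where "l = v \<bullet> (A *v v)"
    have vV: "v \<in> V" and vn: "norm v = 1" using v by auto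
    have vv: "v \<bullet> v = 1" using vn by (simp add: dot_square_norm)
    have bnd: "\<And>x. x \<in> V \<Longrightarrow> x \<bullet> (A *v x) \<le> l * (x \<bullet> x)"
      using rayleigh_bound[OF less.prems(1) vV vn vmax] l_def by blast
    define w where "w = l *\<^sub>R v - A *v v"
    have wV: "w \<in> V" unfolding w_def
      using less.prems vV by (simp add: subspace_diff subspace_scale)
    have "\<And>t. 0 \<le> 2*t*(w \<bullet> w) + t*t*(l*(w \<bullet> w) - w \<bullet> (A *v w))"
    proof -
      fix t :: real
      have "v + t *\<^sub>R w \<in> V" using less.prems vV wV by (simp add: subspace_add subspace_scale)
      hence h: "(v + t *\<^sub>R w) \<bullet> (A *v (v + t *\<^sub>R w)) \<le> l * ((v + t *\<^sub>R w) \<bullet> (v + t *\<^sub>R w))"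
        by (rule bnd)
      have s: "v \<bullet> (A *v (A *v v)) = (A *v v) \<bullet> (A *v v)" by (rule sym_inner[OF symA])
      have "l * ((v + t *\<^sub>R w) \<bullet> (v + t *\<^sub>R w)) - (v + t *\<^sub>R w) \<bullet> (A *v (v + t *\<^sub>R w))
          = 2*t*(w \<bullet> w) + t*t*(l*(w \<bullet> w) - w \<bullet> (A *v w))"
        unfolding w_def using s vv l_def
        by (simp add: algebra_simps inner_add_left inner_add_right inner_diff_left inner_diff_right
              matrix_vector_right_distrib matrix_vector_mult_scaleR inner_commute)
      then show "0 \<le> 2*t*(w \<bullet> w) + t*t*(l*(w \<bullet> w) - w \<bullet> (A *v w))" using h by linarith
    qed
    hence "w \<bullet> w = 0" by (rule quad_zero) simp
    hence eig: "A *v v = l *\<^sub>R v" unfolding w_def by simp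
    define W where "W = {x\<in>V. x \<bullet> v = 0}"
    have Wsub: "subspace W" using less.prems(1) unfolding W_def subspace_def
      by (auto simp: inner_add_left)
    have Winv: "\<forall>x\<in>W. A *v x \<in> W"
    proof
      fix x assume "x \<in> W"
      hence "x \<in> V" "x \<bullet> v = 0" unfolding W_def by auto
      moreover have "(A *v x) \<bullet> v = x \<bullet> (A *v v)" using sym_inner[OF symA] by metis
      ultimately show "A *v x \<in> W" using less.prems(2) eig unfolding W_def by auto
    qed
    have "W \<subset> V"
    proof
      show "W \<subseteq> V" unfolding W_def by auto
      show "W \<noteq> V" using vV vv unfolding W_def by (metis (mono_tags, lifting) mem_Collect_eq zero_neq_one)
    qed
    hence "dim W < dim V"
      using dim_psubset[of W V] span_eq_iff less.prems(1) Wsub by metis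
    then obtain B where B: "finite B" "B \<subseteq> W" "\<forall>v\<in>B. norm v = 1 \<and> (\<exists>l. A *v v = l *\<^sub>R v)"
      "\<forall>v\<in>B. \<forall>w\<in>B. v \<noteq> w \<longrightarrow> v \<bullet> w = 0" "\<forall>x\<in>W. x = (\<Sum>v\<in>B. (x \<bullet> v) *\<^sub>R v)"
      using less.hyps[OF _ Wsub Winv] by blast
    have vB: "v \<notin> B" using B(2) vv unfolding W_def by auto
    have BW: "\<And>u. u \<in> B \<Longrightarrow> u \<bullet> v = 0" using B(2) unfolding W_def by auto
    show ?thesis
    proof (intro exI[of _ "insert v B"] conjI ballI impI)
      show "finite (insert v B)" using B by simp
      show "insert v B \<subseteq> V" using B(2) vV unfolding W_def by auto
    next
      fix u assume "u \<in> insert v B"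
      thus "norm u = 1" using B(3) vn by auto
    next
      fix u assume "u \<in> insert v B"
      thus "\<exists>l. A *v u = l *\<^sub>R u" using B(3) eig by auto
    next
      fix u u' assume "u \<in> insert v B" "u' \<in> insert v B" "u \<noteq> u'"
      thus "u \<bullet> u' = 0" using B(4) BW by (auto simp: inner_commute)
    next
      fix x assume xV: "x \<in> V"
      define x' where "x' = x - (x \<bullet> v) *\<^sub>R v"
      have "x' \<in> W" unfolding W_def x'_def using xV vV less.prems(1) vv
        by (simp add: subspace_diff subspace_scale inner_diff_left)
      hence "x' = (\<Sum>u\<in>B. (x' \<bullet> u) *\<^sub>R u)" using B(5) by blast
      also have "\<dots> = (\<Sum>u\<in>B. (x \<bullet> u) *\<^sub>R u)"
        by (rule sum.cong) (auto simp: x'_def inner_diff_left BW inner_commute[of v])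
      finally have "x = (x \<bullet> v) *\<^sub>R v + (\<Sum>u\<in>B. (x \<bullet> u) *\<^sub>R u)" unfolding x'_def
        by (simp add: algebra_simps)
      thus "x = (\<Sum>u\<in>insert v B. (x \<bullet> u) *\<^sub>R u)" using B(1) vB by simp
    qed
  qed
qed

lemma spectral_univ:
  fixes A :: "real^'n^'n"
  assumes symA: "transpose A = A"
  shows "\<exists>B. finite B \<and> (\<forall>v\<in>B. norm v = 1) \<and> (\<forall>v\<in>B. \<exists>l. A *v v = l *\<^sub>R v)
      \<and> (\<forall>v\<in>B. \<forall>w\<in>B. v \<noteq> w \<longrightarrow> v \<bullet> w = 0)
      \<and> (\<forall>x. x = (\<Sum>v\<in>B. (x \<bullet> v) *\<^sub>R v))"
proof -
  have "\<forall>x\<in>UNIV. A *v x \<in> UNIV" by simp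
  from spectral_sub[OF symA subspace_UNIV this] obtain B where
    B: "finite B" "\<forall>v\<in>B. norm v = 1 \<and> (\<exists>l. A *v v = l *\<^sub>R v)"
      "\<forall>v\<in>B. \<forall>w\<in>B. v \<noteq> w \<longrightarrow> v \<bullet> w = 0" "\<forall>x\<in>UNIV. x = (\<Sum>v\<in>B. (x \<bullet> v) *\<^sub>R v)"
    by (elim exE conjE)
  show ?thesis
  proof (intro exI[of _ B] conjI)
    show "finite B" by (rule B(1))
    show "\<forall>v\<in>B. norm v = 1" using B(2) by blast
    show "\<forall>v\<in>B. \<exists>l. A *v v = l *\<^sub>R v" using B(2) by blast
    show "\<forall>v\<in>B. \<forall>w\<in>B. v \<noteq> w \<longrightarrow> v \<bullet> w = 0" by (rule B(3))
    show "\<forall>x. x = (\<Sum>v\<in>B. (x \<bullet> v) *\<^sub>R v)"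
    proof
      fix x :: "real^'n"
      show "x = (\<Sum>v\<in>B. (x \<bullet> v) *\<^sub>R v)" using B(4) UNIV_I by (rule bspec)
    qed
  qed
qed


lemma on_inner:
  fixes B :: "(real^'n) set"
  assumes "finite B" "\<forall>v\<in>B. norm v = 1" "\<forall>v\<in>B. \<forall>w\<in>B. v \<noteq> w \<longrightarrow> v \<bullet> w = 0" "w \<in> B"
  shows "(\<Sum>v\<in>B. c v *\<^sub>R v) \<bullet> w = c w"
proof -
  have "(\<Sum>v\<in>B. c v *\<^sub>R v) \<bullet> w = (\<Sum>v\<in>B. c v * (v \<bullet> w))" by (simp add: inner_sum_left)
  also have "\<dots> = c w * (w \<bullet> w)"
    by (rule sum.remove[OF assms(1,4), THEN trans]) (use assms(3,4) in auto)
  also have "w \<bullet> w = 1" using assms(2,4) by (simp add: dot_square_norm)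
  finally show ?thesis by simp
qed

lemma outer_sum_mult:
  fixes B :: "(real^'n) set"
  shows "(\<chi> i j. \<Sum>v\<in>B. f v * v$i * v$j) *v x = (\<Sum>v\<in>B. (f v * (v \<bullet> x)) *\<^sub>R v)"
proof (subst vec_eq_iff, intro allI)
  fix i
  have "((\<chi> i j. \<Sum>v\<in>B. f v * v$i * v$j) *v x) $ i = (\<Sum>j\<in>UNIV. (\<Sum>v\<in>B. f v * v$i * v$j) * x$j)"
    by (simp add: matrix_vector_mult_def)
  also have "\<dots> = (\<Sum>j\<in>UNIV. \<Sum>v\<in>B. f v * v$i * (v$j * x$j))"
    by (simp add: sum_distrib_right mult.assoc)
  also have "\<dots> = (\<Sum>v\<in>B. \<Sum>j\<in>UNIV. f v * v$i * (v$j * x$j))"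
    by (rule sum.swap)
  also have "\<dots> = (\<Sum>v\<in>B. f v * v$i * (v \<bullet> x))"
    by (simp add: inner_vec_def sum_distrib_left)
  also have "\<dots> = (\<Sum>v\<in>B. (f v * (v \<bullet> x)) *\<^sub>R v) $ i"
    by (simp add: sum_component mult.commute mult.left_commute)
  finally show "((\<chi> i j. \<Sum>v\<in>B. f v * v$i * v$j) *v x) $ i = (\<Sum>v\<in>B. (f v * (v \<bullet> x)) *\<^sub>R v) $ i" .
qed

lemma sqrt_exists:
  fixes A :: "real^'n^'n"
  assumes "sym_pos_def A"
  shows "\<exists>S. sym_pos_def S \<and> S ** S = A"
proof -
  have symA: "transpose A = A" and pd: "\<And>x. x \<noteq> 0 \<Longrightarrow> x \<bullet> (A *v x) > 0"
    using assms unfolding sym_pos_def_def by auto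
  obtain B where B: "finite B" "\<forall>v\<in>B. norm v = 1" "\<forall>v\<in>B. \<exists>l. A *v v = l *\<^sub>R v"
      "\<forall>v\<in>B. \<forall>w\<in>B. v \<noteq> w \<longrightarrow> v \<bullet> w = 0" "\<forall>x. x = (\<Sum>v\<in>B. (x \<bullet> v) *\<^sub>R v)"
    using spectral_univ[OF symA] by (elim exE conjE)
  define l where "l v = v \<bullet> (A *v v)" for v
  have eig: "A *v v = l v *\<^sub>R v" if "v \<in> B" for v
  proof -
    have "\<exists>c. A *v v = c *\<^sub>R v" using B(3) that by (rule bspec)
    then obtain c where c: "A *v v = c *\<^sub>R v" by (rule exE)
    have "v \<bullet> v = 1" using B(2) that by (simp add: dot_square_norm)
    hence "l v = c" unfolding l_def c by simp
    thus ?thesis using c by simp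
  qed
  have lpos: "l v > 0" if "v \<in> B" for v
  proof -
    have "v \<noteq> 0" using B(2) that by auto
    thus ?thesis unfolding l_def by (rule pd)
  qed
  define S :: "real^'n^'n" where "S = (\<chi> i j. \<Sum>v\<in>B. sqrt (l v) * v$i * v$j)"
  have Sx: "S *v x = (\<Sum>v\<in>B. (sqrt (l v) * (v \<bullet> x)) *\<^sub>R v)" for x
    unfolding S_def by (rule outer_sum_mult)
  have Sxw: "(S *v x) \<bullet> w = sqrt (l w) * (w \<bullet> x)" if "w \<in> B" for x w
    unfolding Sx by (rule on_inner[OF B(1,2,4) that])
  have Axw: "(A *v x) \<bullet> w = l w * (w \<bullet> x)" if "w \<in> B" for x w
  proof -
    have "(A *v x) \<bullet> w = x \<bullet> (A *v w)" by (rule sym_inner[OF symA, symmetric])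
    also have "\<dots> = l w * (x \<bullet> w)" by (simp add: eig[OF that])
    also have "\<dots> = l w * (w \<bullet> x)" by (simp add: inner_commute)
    finally show ?thesis .
  qed
  have "S ** S = A"
  proof (subst matrix_eq, intro allI)
    fix x
    have "(S ** S) *v x = S *v (S *v x)" by (simp add: matrix_vector_mul_assoc)
    also have "\<dots> = (\<Sum>v\<in>B. (sqrt (l v) * (v \<bullet> (S *v x))) *\<^sub>R v)" by (rule Sx)
    also have "\<dots> = (\<Sum>v\<in>B. ((A *v x) \<bullet> v) *\<^sub>R v)"
    proof (rule sum.cong[OF refl])
      fix v assume v: "v \<in> B"
      have "sqrt (l v) * (v \<bullet> (S *v x)) = (A *v x) \<bullet> v"
        using Sxw[OF v] Axw[OF v] lpos[OF v] by (simp add: inner_commute)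
      thus "(sqrt (l v) * (v \<bullet> (S *v x))) *\<^sub>R v = ((A *v x) \<bullet> v) *\<^sub>R v" by simp
    qed
    also have "\<dots> = A *v x" by (rule B(5)[rule_format, symmetric])
    finally show "(S ** S) *v x = A *v x" .
  qed
  moreover have "transpose S = S"
    unfolding S_def transpose_def by (simp add: vec_eq_iff mult_ac)
  moreover have "x \<bullet> (S *v x) > 0" if "x \<noteq> 0" for x
  proof -
    have e: "x \<bullet> (S *v x) = (\<Sum>v\<in>B. sqrt (l v) * (v \<bullet> x) * (v \<bullet> x))"
      unfolding Sx by (simp add: inner_sum_right inner_commute mult.assoc)
    obtain v where v: "v \<in> B" "v \<bullet> x \<noteq> 0"
    proof (rule ccontr)
      assume "\<not> thesis"
      hence "\<forall>v\<in>B. x \<bullet> v = 0" using that by (metis inner_commute)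
      hence "(\<Sum>v\<in>B. (x \<bullet> v) *\<^sub>R v) = 0" by simp
      hence "x = 0" using B(5)[rule_format, of x] by argo
      thus False using \<open>x \<noteq> 0\<close> by simp
    qed
    have "0 < (\<Sum>v\<in>B. sqrt (l v) * (v \<bullet> x) * (v \<bullet> x))"
    proof (rule sum_pos2[OF B(1) v(1)])
      show "0 < sqrt (l v) * (v \<bullet> x) * (v \<bullet> x)"
      proof -
        have "0 < (v \<bullet> x) * (v \<bullet> x)" using v(2) not_real_square_gt_zero by blast
        moreover have "0 < sqrt (l v)" using lpos[OF v(1)] by simp
        ultimately show ?thesis by (simp add: mult.assoc)
      qed
      fix i assume "i \<in> B"
      thus "0 \<le> sqrt (l i) * (i \<bullet> x) * (i \<bullet> x)"
        using lpos[of i] by (simp add: mult.assoc)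
    qed
    thus ?thesis using e by simp
  qed
  ultimately show ?thesis unfolding sym_pos_def_def by blast
qed


lemma transpose_diff_sym:
  fixes S T :: "real^'n^'n"
  assumes "transpose S = S" "transpose T = T"
  shows "transpose (S - T) = S - T"
  using assms unfolding transpose_def by (simp add: vec_eq_iff)

lemma sqrt_unique:
  fixes S T :: "real^'n^'n"
  assumes S: "sym_pos_def S" and T: "sym_pos_def T" and eq: "S ** S = T ** T"
  shows "S = T"
proof -
  define D where "D = S - T"
  have symS: "transpose S = S" and pdS: "\<And>x. x \<noteq> 0 \<Longrightarrow> x \<bullet> (S *v x) > 0"
    using S unfolding sym_pos_def_def by auto
  have symT: "transpose T = T" and pdT: "\<And>x. x \<noteq> 0 \<Longrightarrow> x \<bullet> (T *v x) > 0"
    using T unfolding sym_pos_def_def by auto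
  have symD: "transpose D = D" unfolding D_def by (rule transpose_diff_sym[OF symS symT])
  obtain B where B: "finite B" "\<forall>v\<in>B. norm v = 1" "\<forall>v\<in>B. \<exists>l. D *v v = l *\<^sub>R v"
      "\<forall>v\<in>B. \<forall>w\<in>B. v \<noteq> w \<longrightarrow> v \<bullet> w = 0" "\<forall>x. x = (\<Sum>v\<in>B. (x \<bullet> v) *\<^sub>R v)"
    using spectral_univ[OF symD] by (elim exE conjE)
  have Dv0: "D *v v = 0" if v: "v \<in> B" for v
  proof -
    have "\<exists>c. D *v v = c *\<^sub>R v" using B(3) v by (rule bspec)
    then obtain c where c: "D *v v = c *\<^sub>R v" by (rule exE)
    have vnz: "v \<noteq> 0" using B(2) v by auto
    have "S *v (D *v v) + D *v (T *v v) = S *v (S *v v) - T *v (T *v v)"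
      unfolding D_def
      by (simp add: matrix_vector_mult_diff_rdistrib matrix_vector_mult_diff_distrib)
    also have "\<dots> = (S ** S) *v v - (T ** T) *v v" by (simp add: matrix_vector_mul_assoc)
    finally have "S *v (D *v v) + D *v (T *v v) = (S ** S) *v v - (T ** T) *v v" .
    hence z: "S *v (D *v v) + D *v (T *v v) = 0" using eq by simp
    have "v \<bullet> (D *v (T *v v)) = (D *v v) \<bullet> (T *v v)" by (rule sym_inner[OF symD])
    hence "0 = c * (v \<bullet> (S *v v)) + c * (v \<bullet> (T *v v))"
      using arg_cong[OF z, of "\<lambda>y. v \<bullet> y"] c
      by (simp add: inner_add_right matrix_vector_mult_scaleR)
    hence "c * (v \<bullet> (S *v v) + v \<bullet> (T *v v)) = 0" by (simp add: algebra_simps)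
    moreover have "v \<bullet> (S *v v) + v \<bullet> (T *v v) > 0" using pdS[OF vnz] pdT[OF vnz] by simp
    ultimately have "c = 0" by simp
    thus ?thesis using c by simp
  qed
  have "D *v x = 0" for x
  proof -
    have "\<forall>w\<in>B. (D *v x) \<bullet> w = 0"
      using Dv0 sym_inner[OF symD] by (metis inner_zero_right)
    hence z: "(\<Sum>w\<in>B. ((D *v x) \<bullet> w) *\<^sub>R w) = 0" by simp
    have "D *v x = (\<Sum>w\<in>B. ((D *v x) \<bullet> w) *\<^sub>R w)" by (rule B(5)[rule_format])
    also note z
    finally show ?thesis .
  qed
  hence "S *v x = T *v x" for x unfolding D_def by (simp add: matrix_vector_mult_diff_rdistrib)
  thus ?thesis by (simp add: matrix_eq)
qed

lemma msqrt_prop: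
  fixes A :: "real^'n^'n"
  assumes "sym_pos_def A"
  shows "sym_pos_def (msqrt A) \<and> msqrt A ** msqrt A = A"
proof -
  have "\<exists>!S. sym_pos_def S \<and> S ** S = A"
  proof (rule ex_ex1I)
    show "\<exists>S. sym_pos_def S \<and> S ** S = A" by (rule sqrt_exists[OF assms])
  next
    fix S T assume "sym_pos_def S \<and> S ** S = A" "sym_pos_def T \<and> T ** T = A"
    thus "S = T" using sqrt_unique[of S T] by simp
  qed
  thus ?thesis unfolding msqrt_def by (rule theI')
qed

lemma spd_invertible:
  fixes A :: "real^'n^'n"
  assumes "sym_pos_def A"
  shows "invertible A"
proof -
  have "inj ((*v) A)"
  proof (rule injI)
    fix x y assume "A *v x = A *v y"
    hence "A *v (x - y) = 0" by (simp add: matrix_vector_mult_diff_distrib)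
    thus "x = y" using assms unfolding sym_pos_def_def
      by (metis inner_zero_right less_irrefl right_minus_eq)
  qed
  thus ?thesis using matrix_left_invertible_injective invertible_left_inverse by blast
qed

lemma matrix_inv_props:
  fixes A :: "real^'n^'n"
  assumes "invertible A"
  shows "A ** matrix_inv A = mat 1" "matrix_inv A ** A = mat 1"
proof -
  have "\<exists>A'. A ** A' = mat 1 \<and> A' ** A = mat 1" using assms unfolding invertible_def .
  hence "A ** matrix_inv A = mat 1 \<and> matrix_inv A ** A = mat 1"
    unfolding matrix_inv_def by (rule someI_ex)
  thus "A ** matrix_inv A = mat 1" "matrix_inv A ** A = mat 1" by auto
qed

lemma ell_key:
  fixes Q :: "real^'n^'n"
  assumes Q: "sym_pos_def Q"
  shows "(msqrt Q *v u) \<bullet> (matrix_inv Q *v (msqrt Q *v u)) = u \<bullet> u"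
proof -
  define R where "R = msqrt Q"
  have R: "sym_pos_def R" "R ** R = Q" using msqrt_prop[OF Q] unfolding R_def by auto
  have symR: "transpose R = R" using R(1) unfolding sym_pos_def_def by auto
  define Ri where "Ri = matrix_inv R"
  have Ri: "R ** Ri = mat 1" unfolding Ri_def by (rule matrix_inv_props(1)[OF spd_invertible[OF R(1)]])
  have Qi: "matrix_inv Q ** Q = mat 1" by (rule matrix_inv_props(2)[OF spd_invertible[OF Q]])
  have RRi: "R *v (Ri *v u) = u" using Ri by (simp add: matrix_vector_mul_assoc)
  have "Q *v (Ri *v u) = R *v u" using RRi R(2) by (metis matrix_vector_mul_assoc)
  hence "matrix_inv Q *v (R *v u) = Ri *v u"
    using Qi by (metis matrix_vector_mul_assoc matrix_vector_mul_lid)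
  hence "(R *v u) \<bullet> (matrix_inv Q *v (R *v u)) = (R *v u) \<bullet> (Ri *v u)" by simp
  also have "\<dots> = u \<bullet> (R *v (Ri *v u))" by (rule sym_inner[OF symR, symmetric])
  also have "\<dots> = u \<bullet> u" using RRi by simp
  finally show ?thesis unfolding R_def .
qed

lemma mv_sum:
  fixes M :: "nat \<Rightarrow> real^'n^'n"
  shows "(\<Sum>k\<in>K. M k) *v u = (\<Sum>k\<in>K. M k *v u)"
proof (induction K rule: infinite_finite_induct)
  case (insert k K) then show ?case by (simp add: matrix_vector_mult_add_rdistrib)
qed auto

theorem proposition1:
  fixes M :: "nat \<Rightarrow> real^'n^'n" and Qh :: "real^'n^'n" and t :: nat
  assumes "\<And>k. k \<le> t \<Longrightarrow> sym_pos_def (M k)"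
    and "sym_pos_def Qh"
    and "ellipsoid_msum M t \<subseteq> ellipsoid0 Qh"
  shows "hausdorff_dist (ellipsoid_msum M t) (ellipsoid0 Qh)
           \<le> spec_norm (msqrt Qh - (\<Sum>k\<le>t. msqrt (M k)))"
proof -
  let ?X = "ellipsoid_msum M t" and ?E = "ellipsoid0 Qh"
  define N where "N = spec_norm (msqrt Qh - (\<Sum>k\<le>t. msqrt (M k)))"
  define S where "S = msqrt Qh"
  have bl: "bounded_linear (\<lambda>x. (msqrt Qh - (\<Sum>k\<le>t. msqrt (M k))) *v x)" by simp
  have N0: "0 \<le> N" unfolding N_def spec_norm_def by (rule onorm_pos_le[OF bl])
  have X0: "0 \<in> ?X" unfolding ellipsoid_msum_def ellipsoid0_def
    by (rule CollectI, rule exI[of _ "\<lambda>k. 0"]) simp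
  have E0: "0 \<in> ?E" unfolding ellipsoid0_def by simp
  have part1: "(SUP x\<in>?X. infdist x ?E) \<le> N"
    by (rule cSUP_least) (use X0 assms(3) N0 in auto)
  have part2: "(SUP y\<in>?E. infdist y ?X) \<le> N"
  proof (rule cSUP_least)
    show "?E \<noteq> {}" using E0 by blast
  next
    fix y assume y: "y \<in> ?E"
    have symS: "sym_pos_def S" "S ** S = Qh" using msqrt_prop[OF assms(2)] unfolding S_def by auto
    define u where "u = matrix_inv S *v y"
    have yu: "y = S *v u" unfolding u_def
      using matrix_inv_props(1)[OF spd_invertible[OF symS(1)]]
      by (simp add: matrix_vector_mul_assoc)
    have uu: "u \<bullet> u \<le> 1" using y ell_key[OF assms(2), of u] yu
      unfolding ellipsoid0_def S_def by simp
    hence nu: "norm u \<le> 1" by (simp add: dot_square_norm power_le_one_iff)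
    define x where "x = (\<Sum>k\<le>t. msqrt (M k) *v u)"
    have xX: "x \<in> ?X" unfolding ellipsoid_msum_def x_def
    proof (rule CollectI, rule exI[of _ "\<lambda>k. msqrt (M k) *v u"], intro conjI allI impI refl)
      fix k assume "k \<le> t"
      thus "msqrt (M k) *v u \<in> ellipsoid0 (M k)"
        using ell_key[OF assms(1), of k u] uu unfolding ellipsoid0_def by simp
    qed
    have "infdist y ?X \<le> dist y x" by (rule infdist_le[OF xX])
    also have "dist y x = norm ((msqrt Qh - (\<Sum>k\<le>t. msqrt (M k))) *v u)"
      unfolding dist_norm yu x_def S_def by (simp add: matrix_vector_mult_diff_rdistrib mv_sum)
    also have "\<dots> \<le> N * norm u" unfolding N_def spec_norm_def by (rule onorm[OF bl])
    also have "\<dots> \<le> N" using N0 nu by (simp add: mult_left_le)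
    finally show "infdist y ?X \<le> N" .
  qed
  show ?thesis unfolding hausdorff_dist_def N_def[symmetric] using part1 part2 by simp
qed

end
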